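(* Let $\kappa$ be a field, $r,k\ge1$, $s_1,\dots,s_k\ge0$ integers, $\Gamma$ the complete bipartite supernova quiver with these parameters and $\boldsymbol\mu=(\mu^1,\dots,\mu^k)$ a $k$-tuple of nonzero partitions, $\mu^i=(\mu^i_1\ge\cdots\ge\mu^i_{s_i+1}\ge0)$, with $r\ge|\mu^i|+\mu^i_1$ for all $i$. Let $\boldsymbol\varphi$ be an indecomposable representation of $\Gamma$ over $\kappa$ of dimension vector $\mathbf{v}_{\boldsymbol\mu}$. Then (i) the maps $\varphi_\gamma$, for $\gamma$ running over the arrows $(i;j)\to(i;j-1)$ ($1\le i\le k$, $1\le j\le s_i$) of the long legs, are all injective; and (ii) for each $i=1,\dots,k$, the images of the maps $\varphi_{(l)\to(i;0)}$, $l=1,\dots,r$, span $V^{\boldsymbol\varphi}_{(i;0)}$.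
   Context: $\Gamma$ has vertices $(l)$, $l=1,\dots,r$, and $(i;j)$, $i=1,\dots,k$, $j=0,\dots,s_i$; arrows: one arrow $(l)\to(i;0)$ for each $l,i$ and one arrow $(i;j)\to(i;j-1)$ for $1\le j\le s_i$. $\mathbf{v}_{\boldsymbol\mu}$: $v_{(l)}=1$, $v_{(i;0)}=|\mu^i|$, $v_{(i;j)}=|\mu^i|-\sum_{f=1}^j\mu^i_f$. A representation $\boldsymbol\varphi$ consists of $\kappa$-vector spaces $V^{\boldsymbol\varphi}_a$ ($a$ a vertex) of dimensions $v_a$ and linear maps $\varphi_\gamma:V^{\boldsymbol\varphi}_{t(\gamma)}\to V^{\boldsymbol\varphi}_{h(\gamma)}$ for each arrow $\gamma$; it is indecomposable if it is nonzero and not isomorphic to a direct sum of two nonzero representations. *)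

theory Defs
  imports "Jordan_Normal_Form.Matrix"
begin

text \<open>Finite-dimensional representations of a quiver over a field 'k, realised on the
coordinate spaces 'k^(d a) (d the dimension vector); the linear map attached to an arrow
is given by its matrix.\<close>

definition is_subspace :: "nat \<Rightarrow> 'k::field vec set \<Rightarrow> bool" where
  "is_subspace n U \<longleftrightarrow> U \<subseteq> carrier_vec n \<and> 0\<^sub>v n \<in> U \<and>
     (\<forall>x\<in>U. \<forall>y\<in>U. x + y \<in> U) \<and> (\<forall>c. \<forall>x\<in>U. c \<cdot>\<^sub>v x \<in> U)"

definition spans :: "nat \<Rightarrow> 'k::field vec set set \<Rightarrow> bool" where
  "spans n Ss \<longleftrightarrow> (\<forall>U. is_subspace n U \<and> \<Union>Ss \<subseteq> U \<longrightarrow> carrier_vec n \<subseteq> U)"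

definition is_rep :: "'v set \<Rightarrow> 'e set \<Rightarrow> ('e \<Rightarrow> 'v) \<Rightarrow> ('e \<Rightarrow> 'v) \<Rightarrow> ('v \<Rightarrow> nat)
    \<Rightarrow> ('e \<Rightarrow> 'k::field mat) \<Rightarrow> bool" where
  "is_rep Vs As tlf hdf d phi \<longleftrightarrow>
     (\<forall>g\<in>As. tlf g \<in> Vs \<and> hdf g \<in> Vs \<and> phi g \<in> carrier_mat (d (hdf g)) (d (tlf g)))"

text \<open>A representation is decomposable iff it is (isomorphic to) the direct sum of two
nonzero subrepresentations: at every vertex the space splits as an internal direct sum
U a + W a, both families being stable under all arrow maps, and both nonzero.\<close>
definition decomposable :: "'v set \<Rightarrow> 'e set \<Rightarrow> ('e \<Rightarrow> 'v) \<Rightarrow> ('e \<Rightarrow> 'v) \<Rightarrow> ('v \<Rightarrow> nat)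
    \<Rightarrow> ('e \<Rightarrow> 'k::field mat) \<Rightarrow> bool" where
  "decomposable Vs As tlf hdf d phi \<longleftrightarrow>
     (\<exists>U W. (\<forall>a\<in>Vs. is_subspace (d a) (U a) \<and> is_subspace (d a) (W a) \<and>
                    U a \<inter> W a = {0\<^sub>v (d a)} \<and>
                    (\<forall>x\<in>carrier_vec (d a). \<exists>u\<in>U a. \<exists>w\<in>W a. x = u + w)) \<and>
            (\<forall>g\<in>As. (\<forall>x\<in>U (tlf g). phi g *\<^sub>v x \<in> U (hdf g)) \<and>
                     (\<forall>x\<in>W (tlf g). phi g *\<^sub>v x \<in> W (hdf g))) \<and>
            (\<exists>a\<in>Vs. U a \<noteq> {0\<^sub>v (d a)}) \<and> (\<exists>a\<in>Vs. W a \<noteq> {0\<^sub>v (d a)}))"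

definition indecomposable :: "'v set \<Rightarrow> 'e set \<Rightarrow> ('e \<Rightarrow> 'v) \<Rightarrow> ('e \<Rightarrow> 'v) \<Rightarrow> ('v \<Rightarrow> nat)
    \<Rightarrow> ('e \<Rightarrow> 'k::field mat) \<Rightarrow> bool" where
  "indecomposable Vs As tlf hdf d phi \<longleftrightarrow>
     (\<exists>a\<in>Vs. d a > 0) \<and> \<not> decomposable Vs As tlf hdf d phi"

text \<open>The complete bipartite supernova quiver: vertices (l) = SV l and (i;j) = LV i j,
arrows (l)->(i;0) = Star l i and (i;j)->(i;j-1) = Leg i j.\<close>
datatype sn_vertex = SV nat | LV nat nat
datatype sn_arrow = Star nat nat | Leg nat nat

definition sn_vertices :: "nat \<Rightarrow> nat \<Rightarrow> (nat \<Rightarrow> nat) \<Rightarrow> sn_vertex set" where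
  "sn_vertices r k s = {SV l | l. 1 \<le> l \<and> l \<le> r} \<union> {LV i j | i j. 1 \<le> i \<and> i \<le> k \<and> j \<le> s i}"

definition sn_arrows :: "nat \<Rightarrow> nat \<Rightarrow> (nat \<Rightarrow> nat) \<Rightarrow> sn_arrow set" where
  "sn_arrows r k s = {Star l i | l i. 1 \<le> l \<and> l \<le> r \<and> 1 \<le> i \<and> i \<le> k}
     \<union> {Leg i j | i j. 1 \<le> i \<and> i \<le> k \<and> 1 \<le> j \<and> j \<le> s i}"

fun sn_tail :: "sn_arrow \<Rightarrow> sn_vertex" where
  "sn_tail (Star l i) = SV l"
| "sn_tail (Leg i j) = LV i j"

fun sn_head :: "sn_arrow \<Rightarrow> sn_vertex" where
  "sn_head (Star l i) = LV i 0"
| "sn_head (Leg i j) = LV i (j - 1)"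

text \<open>mu i f = \<mu>^i_f for f = 1..s_i+1; |\<mu>^i| = sum of the parts.\<close>
definition psize :: "(nat \<Rightarrow> nat \<Rightarrow> nat) \<Rightarrow> (nat \<Rightarrow> nat) \<Rightarrow> nat \<Rightarrow> nat" where
  "psize mu s i = (\<Sum>f=1..s i + 1. mu i f)"

fun dimvec :: "(nat \<Rightarrow> nat \<Rightarrow> nat) \<Rightarrow> (nat \<Rightarrow> nat) \<Rightarrow> sn_vertex \<Rightarrow> nat" where
  "dimvec mu s (SV l) = 1"
| "dimvec mu s (LV i j) = psize mu s i - (\<Sum>f=1..j. mu i f)"

end

theory Submission
  imports Defs
begin


definition vtl :: "'a vec \<Rightarrow> 'a vec" where "vtl v = vec (dim_vec v - 1) (\<lambda>i. v $ Suc i)"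

lemma vCons_split: assumes "v \<in> carrier_vec (Suc n)" shows "v = vCons (v $ 0) (vtl v)" "vtl v \<in> carrier_vec n"
  using assms by (auto intro!: eq_vecI simp: vtl_def vec_index_vCons)

lemma vCons_add: assumes "v \<in> carrier_vec n" "w \<in> carrier_vec n"
  shows "vCons a v + vCons b w = vCons (a+b) (v+w)"
  using assms by (auto intro!: eq_vecI simp: vec_index_vCons)

lemma vCons_smult: "c \<cdot>\<^sub>v vCons a v = vCons (c*a) (c \<cdot>\<^sub>v v)"
  by (auto intro!: eq_vecI simp: vec_index_vCons)

lemma vCons_minus: assumes "v \<in> carrier_vec n" "w \<in> carrier_vec n"
  shows "vCons a v - vCons b w = vCons (a-b) (v-w)"
  using assms by (auto intro!: eq_vecI simp: vec_index_vCons)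

lemma subspace_diff: assumes "is_subspace n U" "x \<in> U" "y \<in> U" shows "x + (c \<cdot>\<^sub>v y) \<in> U"
  using assms unfolding is_subspace_def by blast

lemma sep_lemma:
  fixes z :: "'k::field vec"
  shows "is_subspace n U \<Longrightarrow> z \<in> carrier_vec n \<Longrightarrow> z \<notin> U \<Longrightarrow>
     \<exists>w\<in>carrier_vec n. w \<bullet> z = 1 \<and> (\<forall>u\<in>U. w \<bullet> u = 0)"
proof (induction n arbitrary: U z)
  case 0
  then have "z = 0\<^sub>v 0" by (auto intro!: eq_vecI)
  with 0 show ?case unfolding is_subspace_def by auto
next
  case (Suc n)
  note sub = Suc.prems(1)
  have Uc: "U \<subseteq> carrier_vec (Suc n)" using sub unfolding is_subspace_def by auto
  define U' where "U' = {v \<in> carrier_vec n. vCons 0 v \<in> U}"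
  have sub': "is_subspace n U'"
    unfolding is_subspace_def U'_def
  proof (intro conjI ballI allI)
    show "0\<^sub>v n \<in> {v \<in> carrier_vec n. vCons 0 v \<in> U}"
      using sub unfolding is_subspace_def by (auto simp: zero_vec_Suc[symmetric])
  next
    fix x y assume x: "x \<in> {v \<in> carrier_vec n. vCons 0 v \<in> U}" and y: "y \<in> {v \<in> carrier_vec n. vCons 0 v \<in> U}"
    then have "vCons 0 x + vCons 0 y \<in> U" using sub unfolding is_subspace_def by auto
    then show "x + y \<in> {v \<in> carrier_vec n. vCons 0 v \<in> U}" using x y by (auto simp: vCons_add)
  next
    fix c x assume x: "x \<in> {v \<in> carrier_vec n. vCons 0 v \<in> U}"
    then have "c \<cdot>\<^sub>v vCons 0 x \<in> U" using sub unfolding is_subspace_def by auto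
    then show "c \<cdot>\<^sub>v x \<in> {v \<in> carrier_vec n. vCons 0 v \<in> U}" using x by (auto simp: vCons_smult)
  qed auto
  define a where "a = z $ 0"
  define z0 where "z0 = vtl z"
  have zsplit: "z = vCons a z0" and z0c: "z0 \<in> carrier_vec n"
    using vCons_split[OF Suc.prems(2)] a_def z0_def by auto
  show ?case
  proof (cases "\<exists>e\<in>U. e $ 0 \<noteq> 0")
    case True
    then obtain e where eU: "e \<in> U" and e0: "e $ 0 \<noteq> 0" by auto
    define e1 where "e1 = (1 / e $ 0) \<cdot>\<^sub>v e"
    have e1U: "e1 \<in> U" using sub eU unfolding is_subspace_def e1_def by auto
    have e1c: "e1 \<in> carrier_vec (Suc n)" using e1U Uc by auto
    have e11: "e1 $ 0 = 1" using e0 e1c unfolding e1_def by auto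
    define f where "f = vtl e1"
    have e1split: "e1 = vCons 1 f" and fc: "f \<in> carrier_vec n"
      using vCons_split[OF e1c] e11 f_def by auto
    define z1 where "z1 = z0 - a \<cdot>\<^sub>v f"
    have z1c: "z1 \<in> carrier_vec n" using z0c fc z1_def by auto
    have "z1 \<notin> U'"
    proof
      assume "z1 \<in> U'"
      then have "vCons 0 z1 \<in> U" unfolding U'_def by auto
      then have "vCons 0 z1 + a \<cdot>\<^sub>v e1 \<in> U" using subspace_diff[OF sub _ e1U] by auto
      moreover have "vCons 0 z1 + a \<cdot>\<^sub>v e1 = z"
        unfolding zsplit e1split z1_def using z0c fc
        by (auto intro!: eq_vecI simp: vec_index_vCons)
      ultimately show False using Suc.prems(3) by auto
    qed
    from Suc.IH[OF sub' z1c this] obtain w' where w'c: "w' \<in> carrier_vec n"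
      and w'z: "w' \<bullet> z1 = 1" and w'U: "\<forall>u\<in>U'. w' \<bullet> u = 0" by auto
    define w where "w = vCons (- (w' \<bullet> f)) w'"
    show ?thesis
    proof (intro bexI conjI ballI)
      show "w \<in> carrier_vec (Suc n)" using w'c w_def by auto
      have "w' \<bullet> z1 = w' \<bullet> z0 - a * (w' \<bullet> f)"
        unfolding z1_def using w'c z0c fc by (simp add: scalar_prod_minus_distrib[of _ n])
      then show "w \<bullet> z = 1" using w'z unfolding w_def zsplit by (simp add: algebra_simps)
    next
      fix u assume uU: "u \<in> U"
      then have uc: "u \<in> carrier_vec (Suc n)" using Uc by auto
      define b where "b = u $ 0"
      define u0 where "u0 = vtl u"
      have usplit: "u = vCons b u0" and u0c: "u0 \<in> carrier_vec n"
        using vCons_split[OF uc] b_def u0_def by auto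
      have "u + (-b) \<cdot>\<^sub>v e1 \<in> U" using subspace_diff[OF sub uU e1U] .
      moreover have "u + (-b) \<cdot>\<^sub>v e1 = vCons 0 (u0 - b \<cdot>\<^sub>v f)"
        unfolding usplit e1split using u0c fc
        by (auto intro!: eq_vecI simp: vec_index_vCons)
      ultimately have "u0 - b \<cdot>\<^sub>v f \<in> U'" unfolding U'_def using u0c fc by auto
      then have "w' \<bullet> (u0 - b \<cdot>\<^sub>v f) = 0" using w'U by auto
      moreover have "w' \<bullet> (u0 - b \<cdot>\<^sub>v f) = w' \<bullet> u0 - b * (w' \<bullet> f)"
        using w'c u0c fc by (simp add: scalar_prod_minus_distrib[of _ n])
      ultimately show "w \<bullet> u = 0" unfolding w_def usplit by (simp add: algebra_simps)
    qed
  next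
    case False
    then have U0: "\<forall>u\<in>U. u $ 0 = 0" by auto
    show ?thesis
    proof (cases "a = 0")
      case False
      define w :: "'k vec" where "w = vCons (1/a) (0\<^sub>v n)"
      show ?thesis
      proof (intro bexI conjI ballI)
        show "w \<in> carrier_vec (Suc n)" using w_def by auto
        show "w \<bullet> z = 1" unfolding w_def zsplit using False z0c by simp
      next
        fix u assume uU: "u \<in> U"
        then have uc: "u \<in> carrier_vec (Suc n)" using Uc by auto
        have "u = vCons (u $ 0) (vtl u)" "vtl u \<in> carrier_vec n" using vCons_split[OF uc] by auto
        then show "w \<bullet> u = 0" unfolding w_def using U0 uU
          by (metis add_0 mult_zero_right scalar_prod_vCons scalar_prod_left_zero)
      qed
    next
      case True
      have "z0 \<notin> U'" using Suc.prems(3) zsplit True unfolding U'_def by auto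
      from Suc.IH[OF sub' z0c this] obtain w' where w'c: "w' \<in> carrier_vec n"
        and w'z: "w' \<bullet> z0 = 1" and w'U: "\<forall>u\<in>U'. w' \<bullet> u = 0" by auto
      define w where "w = vCons 0 w'"
      show ?thesis
      proof (intro bexI conjI ballI)
        show "w \<in> carrier_vec (Suc n)" using w_def w'c by auto
        show "w \<bullet> z = 1" unfolding w_def zsplit using w'z by simp
      next
        fix u assume uU: "u \<in> U"
        then have uc: "u \<in> carrier_vec (Suc n)" using Uc by auto
        have us: "u = vCons 0 (vtl u)" "vtl u \<in> carrier_vec n" using vCons_split[OF uc] U0 uU by auto
        then have "vtl u \<in> U'" unfolding U'_def using uU by auto
        then show "w \<bullet> u = 0" unfolding w_def using w'U us by (metis add_0 mult_zero_left scalar_prod_vCons)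
      qed
    qed
  qed
qed




lemma mat_vec_zero[simp]: assumes "M \<in> carrier_mat n' n"
  shows "M *\<^sub>v 0\<^sub>v n = (0\<^sub>v n' :: 'k::field vec)"
  using assms by (intro eq_vecI) auto

lemma lin_g: assumes "M \<in> carrier_mat n' n" "v \<in> carrier_vec n'" "x \<in> carrier_vec n" "y \<in> carrier_vec n"
  shows "v \<bullet> (M *\<^sub>v (x + y)) = v \<bullet> (M *\<^sub>v x) + v \<bullet> (M *\<^sub>v y)"
    "v \<bullet> (M *\<^sub>v (a \<cdot>\<^sub>v x)) = (a::'k::field) * (v \<bullet> (M *\<^sub>v x))"
  using assms by (auto simp: mult_add_distrib_mat_vec scalar_prod_add_distrib[of _ n'] mult_mat_vec)

lemma kernel_subspace: assumes "M \<in> carrier_mat n' n" "v \<in> carrier_vec n'"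
  shows "is_subspace n {x\<in>carrier_vec n. v \<bullet> (M *\<^sub>v x) = (0::'k::field)}"
  unfolding is_subspace_def using lin_g[OF assms] assms by auto

lemma full_subspace: "is_subspace n (carrier_vec n :: 'k::field vec set)"
  unfolding is_subspace_def by auto

lemma zero_subspace: "is_subspace n {0\<^sub>v n :: 'k::field vec}"
  unfolding is_subspace_def by auto

lemma line_subspace: assumes "c \<in> carrier_vec n"
  shows "is_subspace n {a \<cdot>\<^sub>v (c::'k::field vec) | a. True}"
  unfolding is_subspace_def
proof (intro conjI ballI allI)
  show "0\<^sub>v n \<in> {a \<cdot>\<^sub>v c |a. True}" using assms by (intro CollectI exI[of _ 0]) auto
  fix x y assume "x \<in> {a \<cdot>\<^sub>v c |a. True}" "y \<in> {a \<cdot>\<^sub>v c |a. True}"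
  then obtain a b where "x = a \<cdot>\<^sub>v c" "y = b \<cdot>\<^sub>v c" by auto
  then show "x + y \<in> {a \<cdot>\<^sub>v c |a. True}" using assms by (intro CollectI exI[of _ "a+b"]) (auto simp: add_smult_distrib_vec)
next
  fix e x assume "x \<in> {a \<cdot>\<^sub>v c |a. True}"
  then obtain a where "x = a \<cdot>\<^sub>v c" by auto
  then show "e \<cdot>\<^sub>v x \<in> {a \<cdot>\<^sub>v c |a. True}" by (intro CollectI exI[of _ "e*a"]) (auto simp: smult_smult_assoc)
qed (use assms in auto)

lemma split_vertex:
  fixes c :: "'k::field vec"
  assumes M: "M \<in> carrier_mat n' n" and v: "v \<in> carrier_vec n'" and c: "c \<in> carrier_vec n"
    and vc: "v \<bullet> (M *\<^sub>v c) = 1"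
  shows "{x\<in>carrier_vec n. v \<bullet> (M *\<^sub>v x) = 0} \<inter> {a \<cdot>\<^sub>v c | a. True} = {0\<^sub>v n}"
    "\<forall>x\<in>carrier_vec n. \<exists>u\<in>{x\<in>carrier_vec n. v \<bullet> (M *\<^sub>v x) = 0}. \<exists>w\<in>{a \<cdot>\<^sub>v c | a. True}. x = u + w"
proof -
  show "{x\<in>carrier_vec n. v \<bullet> (M *\<^sub>v x) = 0} \<inter> {a \<cdot>\<^sub>v c | a. True} = {0\<^sub>v n}"
  proof (intro equalityI subsetI)
    fix x :: "'k vec" assume "x \<in> {x\<in>carrier_vec n. v \<bullet> (M *\<^sub>v x) = 0} \<inter> {a \<cdot>\<^sub>v c | a. True}"
    then obtain a where x: "x = a \<cdot>\<^sub>v c" and "v \<bullet> (M *\<^sub>v x) = 0" by auto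
    then have "a = 0" using lin_g(2)[OF M v c c, of a] vc by simp
    then show "x \<in> {0\<^sub>v n}" using x c by auto
  next
    fix x :: "'k vec" assume "x \<in> {0\<^sub>v n}"
    then show "x \<in> {x\<in>carrier_vec n. v \<bullet> (M *\<^sub>v x) = 0} \<inter> {a \<cdot>\<^sub>v c | a. True}"
      using M v c by (auto intro!: exI[of _ 0])
  qed
  show "\<forall>x\<in>carrier_vec n. \<exists>u\<in>{x\<in>carrier_vec n. v \<bullet> (M *\<^sub>v x) = 0}. \<exists>w\<in>{a \<cdot>\<^sub>v c | a. True}. x = u + w"
  proof
    fix x :: "'k vec" assume x: "x \<in> carrier_vec n"
    define g where "g = v \<bullet> (M *\<^sub>v x)"
    have "x + (-g) \<cdot>\<^sub>v c \<in> {x\<in>carrier_vec n. v \<bullet> (M *\<^sub>v x) = 0}"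
      using lin_g[OF M v x, of "(-g) \<cdot>\<^sub>v c"] lin_g(2)[OF M v c c, of "-g"] vc x c g_def by auto
    moreover have "x = (x + (-g) \<cdot>\<^sub>v c) + g \<cdot>\<^sub>v c"
      using x c by (auto intro!: eq_vecI simp: algebra_simps)
    ultimately show "\<exists>u\<in>{x\<in>carrier_vec n. v \<bullet> (M *\<^sub>v x) = 0}. \<exists>w\<in>{a \<cdot>\<^sub>v c | a. True}. x = u + w"
      by blast
  qed
qed




fun cm :: "(sn_arrow \<Rightarrow> 'k::field mat) \<Rightarrow> (sn_vertex \<Rightarrow> nat) \<Rightarrow> nat \<Rightarrow> nat \<Rightarrow> nat \<Rightarrow> 'k mat" where
  "cm phi d i m 0 = 1\<^sub>m (d (LV i m))"
| "cm phi d i m (Suc p) = cm phi d i m p * phi (Leg i (m + p + 1))"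

locale arm =
  fixes phi :: "sn_arrow \<Rightarrow> 'k::field mat" and d :: "sn_vertex \<Rightarrow> nat" and i S :: nat
  assumes legc: "\<And>j. 1 \<le> j \<Longrightarrow> j \<le> S \<Longrightarrow> phi (Leg i j) \<in> carrier_mat (d (LV i (j-1))) (d (LV i j))"
begin

lemma cm_carrier: "m + p \<le> S \<Longrightarrow> cm phi d i m p \<in> carrier_mat (d (LV i m)) (d (LV i (m+p)))"
proof (induction p)
  case 0 then show ?case by simp
next
  case (Suc p)
  have "phi (Leg i (m + p + 1)) \<in> carrier_mat (d (LV i (m+p))) (d (LV i (m + Suc p)))"
    using legc[of "m+p+1"] Suc.prems by simp
  with Suc show ?case by auto
qed

lemma cm_comp: "m + p + q \<le> S \<Longrightarrow> cm phi d i m (p + q) = cm phi d i m p * cm phi d i (m+p) q"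
proof (induction q)
  case 0 then show ?case using cm_carrier[of m p] by simp
next
  case (Suc q)
  have c1: "cm phi d i m p \<in> carrier_mat (d (LV i m)) (d (LV i (m+p)))" using cm_carrier Suc.prems by simp
  have c2: "cm phi d i (m+p) q \<in> carrier_mat (d (LV i (m+p))) (d (LV i (m+p+q)))" using cm_carrier Suc.prems by simp
  have c3: "phi (Leg i (m + p + q + 1)) \<in> carrier_mat (d (LV i (m+p+q))) (d (LV i (m+p+q+1)))"
    using legc[of "m+p+q+1"] Suc.prems by simp
  have "cm phi d i m (p + Suc q) = cm phi d i m (p+q) * phi (Leg i (m + (p+q) + 1))" by simp
  also have "\<dots> = (cm phi d i m p * cm phi d i (m+p) q) * phi (Leg i (m + p + q + 1))"
    using Suc by (simp add: add.assoc)
  also have "\<dots> = cm phi d i m p * (cm phi d i (m+p) q * phi (Leg i (m + p + q + 1)))"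
    using c1 c2 c3 by (simp add: assoc_mult_mat)
  finally show ?case by (simp add: add.assoc)
qed

lemma cm_one: "1 \<le> j \<Longrightarrow> j \<le> S \<Longrightarrow> cm phi d i (j-1) 1 = phi (Leg i j)"
  using legc[of j] by simp

end



lemma vert_iff: "SV l \<in> sn_vertices r k s \<longleftrightarrow> 1 \<le> l \<and> l \<le> r"
  "LV i j \<in> sn_vertices r k s \<longleftrightarrow> 1 \<le> i \<and> i \<le> k \<and> j \<le> s i"
  unfolding sn_vertices_def by auto

lemma arr_iff: "Star l i \<in> sn_arrows r k s \<longleftrightarrow> 1 \<le> l \<and> l \<le> r \<and> 1 \<le> i \<and> i \<le> k"
  "Leg i j \<in> sn_arrows r k s \<longleftrightarrow> 1 \<le> i \<and> i \<le> k \<and> 1 \<le> j \<and> j \<le> s i"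
  unfolding sn_arrows_def by auto

lemma rep_star: assumes "is_rep (sn_vertices r k s) (sn_arrows r k s) sn_tail sn_head d phi"
  "1 \<le> l" "l \<le> r" "1 \<le> i" "i \<le> k"
  shows "phi (Star l i) \<in> carrier_mat (d (LV i 0)) (d (SV l))"
proof -
  have "Star l i \<in> sn_arrows r k s" using assms(2-) by (simp add: arr_iff)
  then show ?thesis using assms(1) unfolding is_rep_def by fastforce
qed

lemma rep_leg: assumes "is_rep (sn_vertices r k s) (sn_arrows r k s) sn_tail sn_head d phi"
  "1 \<le> i" "i \<le> k" "1 \<le> j" "j \<le> s i"
  shows "phi (Leg i j) \<in> carrier_mat (d (LV i (j-1))) (d (LV i j))"
proof -
  have "Leg i j \<in> sn_arrows r k s" using assms(2-) by (simp add: arr_iff)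
  then show ?thesis using assms(1) unfolding is_rep_def by fastforce
qed

lemma smult_zero_vec'[simp]: "(e::'k::field) \<cdot>\<^sub>v 0\<^sub>v n = 0\<^sub>v n"
  by (rule eq_vecI) auto

lemma trivial_vertex:
  fixes C Z :: "'k::field vec set"
  assumes "C = carrier_vec n" "Z = {0\<^sub>v n}"
  shows "is_subspace n C \<and> is_subspace n Z \<and> C \<inter> Z = {0\<^sub>v n} \<and> (\<forall>x\<in>carrier_vec n. \<exists>u\<in>C. \<exists>w\<in>Z. x = u + w)"
proof -
  have "\<forall>x\<in>carrier_vec n. \<exists>u\<in>carrier_vec n. \<exists>w\<in>{0\<^sub>v n}. x = u + (w::'k vec)"
  proof
    fix x :: "'k vec" assume "x \<in> carrier_vec n"
    then have "x = x + 0\<^sub>v n" by simp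
    then show "\<exists>u\<in>carrier_vec n. \<exists>w\<in>{0\<^sub>v n}. x = u + w" using \<open>x \<in> carrier_vec n\<close> by blast
  qed
  moreover have "carrier_vec n \<inter> {0\<^sub>v n} = {0\<^sub>v n :: 'k vec}" by auto
  ultimately show ?thesis using full_subspace[of n] zero_subspace[of n] assms by blast
qed

lemma decomp:
  fixes phi :: "sn_arrow \<Rightarrow> 'k::field mat"
  assumes rep: "is_rep (sn_vertices r k s) (sn_arrows r k s) sn_tail sn_head d phi"
    and dSV: "\<And>l. d (SV l) = 1"
    and r1: "r \<ge> 1" and i1: "1 \<le> i" and ik: "i \<le> k"
    and mt: "m \<le> t" and ts: "t \<le> s i"
    and yc: "y \<in> carrier_vec (d (LV i t))" and wc: "w \<in> carrier_vec (d (LV i m))"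
    and wy: "w \<bullet> (cm phi d i m (t-m) *\<^sub>v y) = 1"
    and high: "\<And>j x. t < j \<Longrightarrow> j \<le> s i \<Longrightarrow> x \<in> carrier_vec (d (LV i j)) \<Longrightarrow> w \<bullet> (cm phi d i m (j-m) *\<^sub>v x) = 0"
    and star: "\<And>l x. m = 0 \<Longrightarrow> 1 \<le> l \<Longrightarrow> l \<le> r \<Longrightarrow> x \<in> carrier_vec 1 \<Longrightarrow> w \<bullet> (phi (Star l i) *\<^sub>v x) = 0"
    and bot: "0 < m \<Longrightarrow> phi (Leg i m) *\<^sub>v (cm phi d i m (t-m) *\<^sub>v y) = 0\<^sub>v (d (LV i (m-1)))"
  shows "decomposable (sn_vertices r k s) (sn_arrows r k s) sn_tail sn_head d phi"
proof -
  interpret arm phi d i "s i" using rep_leg[OF rep i1 ik] by unfold_locales auto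
  define g where "g j x = w \<bullet> (cm phi d i m (j-m) *\<^sub>v x)" for j x
  define c where "c j = cm phi d i j (t-j) *\<^sub>v y" for j
  have F0: "cm phi d i m (j-m) \<in> carrier_mat (d (LV i m)) (d (LV i j))" if "m \<le> j" "j \<le> s i" for j
    using cm_carrier[of m "j-m"] that by simp
  have Fc: "c j \<in> carrier_vec (d (LV i j))" if "j \<le> t" for j
    unfolding c_def using cm_carrier[of j "t-j"] that ts yc by simp
  have F1: "g j (c j) = 1" if "m \<le> j" "j \<le> t" for j
  proof -
    have "cm phi d i m (t-m) = cm phi d i m ((j-m) + (t-j))" using that by simp
    also have "\<dots> = cm phi d i m (j-m) * cm phi d i j (t-j)"
      using cm_comp[of m "j-m" "t-j"] that ts by simp
    finally have "cm phi d i m (t-m) *\<^sub>v y = cm phi d i m (j-m) *\<^sub>v c j"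
      unfolding c_def using F0[of j] cm_carrier[of j "t-j"] that ts yc by simp
    then show ?thesis using wy unfolding g_def by simp
  qed
  have F3: "g j x = g (j-1) (phi (Leg i j) *\<^sub>v x)" if "m < j" "j \<le> s i" "x \<in> carrier_vec (d (LV i j))" for j x
  proof -
    have jm: "j-m = (j-1-m) + 1" using that by arith
    have "cm phi d i m (j-m) = cm phi d i m ((j-1-m) + 1)" by (subst jm) (rule refl)
    also have "\<dots> = cm phi d i m (j-1-m) * cm phi d i (j-1) 1"
      using cm_comp[of m "j-1-m" 1] that by simp
    also have "\<dots> = cm phi d i m (j-1-m) * phi (Leg i j)" using cm_one[of j] that by (simp del: cm.simps)
    finally have eq: "cm phi d i m (j-m) = cm phi d i m (j-1-m) * phi (Leg i j)" .
    have "cm phi d i m (j-m) *\<^sub>v x = cm phi d i m (j-1-m) *\<^sub>v (phi (Leg i j) *\<^sub>v x)"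
    proof -
      have c1: "cm phi d i m (j-1-m) \<in> carrier_mat (d (LV i m)) (d (LV i (j-1)))" using F0[of "j-1"] that by simp
      have c2: "phi (Leg i j) \<in> carrier_mat (d (LV i (j-1))) (d (LV i j))" using legc[of j] that by simp
      show ?thesis unfolding eq by (rule assoc_mult_mat_vec[OF c1 c2 that(3)])
    qed
    then show ?thesis unfolding g_def by simp
  qed
  have F4: "phi (Leg i j) *\<^sub>v c j = c (j-1)" if "m < j" "j \<le> t" for j
  proof -
    have jm: "t-(j-1) = 1 + (t-j)" using that by arith
    have "cm phi d i (j-1) (t-(j-1)) = cm phi d i (j-1) (1 + (t-j))" by (subst jm) (rule refl)
    also have "\<dots> = cm phi d i (j-1) 1 * cm phi d i (j-1+1) (t-j)"
      using cm_comp[of "j-1" 1 "t-j"] that ts by simp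
    also have "\<dots> = phi (Leg i j) * cm phi d i j (t-j)" using cm_one[of j] that ts by simp
    finally show ?thesis unfolding c_def
      using legc[of j] cm_carrier[of j "t-j"] that ts yc by simp
  qed
  have gc: "g j x \<in> UNIV" for j x by simp
  define U where "U a = (case a of SV l \<Rightarrow> carrier_vec (d a)
      | LV i' j \<Rightarrow> if i' = i \<and> m \<le> j then {x\<in>carrier_vec (d a). g j x = 0} else carrier_vec (d a))" for a
  define W where "W a = (case a of SV l \<Rightarrow> {0\<^sub>v (d a)}
      | LV i' j \<Rightarrow> if i' = i \<and> m \<le> j \<and> j \<le> t then {e \<cdot>\<^sub>v c j | e. True} else {0\<^sub>v (d a)})" for a
  show ?thesis
    unfolding decomposable_def
  proof (rule exI[of _ U], rule exI[of _ W], intro conjI)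
    show "\<forall>a\<in>sn_vertices r k s. is_subspace (d a) (U a) \<and> is_subspace (d a) (W a) \<and> U a \<inter> W a = {0\<^sub>v (d a)} \<and>
        (\<forall>x\<in>carrier_vec (d a). \<exists>u\<in>U a. \<exists>w\<in>W a. x = u + w)"
    proof (intro ballI)
      fix a assume aV: "a \<in> sn_vertices r k s"
      show "is_subspace (d a) (U a) \<and> is_subspace (d a) (W a) \<and> U a \<inter> W a = {0\<^sub>v (d a)} \<and>
        (\<forall>x\<in>carrier_vec (d a). \<exists>u\<in>U a. \<exists>w\<in>W a. x = u + w)"
      proof (cases a)
        case (SV l)
        have "U a = carrier_vec (d a)" "W a = {0\<^sub>v (d a)}" unfolding U_def W_def SV by simp_all
        then show ?thesis by (intro trivial_vertex)
      next
        case (LV i' j)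
        show ?thesis
        proof (cases "i' = i \<and> m \<le> j")
          case False
          then have "U a = carrier_vec (d a)" "W a = {0\<^sub>v (d a)}" unfolding U_def W_def LV by auto
          then show ?thesis by (intro trivial_vertex)
        next
          case True
          then have ii: "i' = i" and mj: "m \<le> j" by auto
          have js: "j \<le> s i" using aV LV ii by (simp add: vert_iff)
          show ?thesis
          proof (cases "j \<le> t")
            case True
            have Ue: "U a = {x\<in>carrier_vec (d (LV i j)). w \<bullet> (cm phi d i m (j-m) *\<^sub>v x) = 0}"
              unfolding U_def LV g_def using ii mj by simp
            have We: "W a = {e \<cdot>\<^sub>v c j | e. True}" unfolding W_def LV using ii mj True by simp
            have 1: "w \<bullet> (cm phi d i m (j-m) *\<^sub>v c j) = 1" using F1[OF mj True] unfolding g_def .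
            show ?thesis unfolding Ue We unfolding LV ii
              using kernel_subspace[OF F0[OF mj js] wc] line_subspace[OF Fc[OF True]]
                split_vertex[OF F0[OF mj js] wc Fc[OF True] 1] by auto
          next
            case False
            have Ue: "U a = carrier_vec (d a)"
              unfolding U_def LV g_def using ii mj high[of j] False js by auto
            have We: "W a = {0\<^sub>v (d a)}" unfolding W_def LV using False by auto
            show ?thesis unfolding Ue We by (intro trivial_vertex) auto
          qed
        qed
      qed
    qed
  next
    show "\<forall>ga\<in>sn_arrows r k s. (\<forall>x\<in>U (sn_tail ga). phi ga *\<^sub>v x \<in> U (sn_head ga)) \<and>
             (\<forall>x\<in>W (sn_tail ga). phi ga *\<^sub>v x \<in> W (sn_head ga))"
    proof
      fix ga assume gA: "ga \<in> sn_arrows r k s"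
      show "(\<forall>x\<in>U (sn_tail ga). phi ga *\<^sub>v x \<in> U (sn_head ga)) \<and>
             (\<forall>x\<in>W (sn_tail ga). phi ga *\<^sub>v x \<in> W (sn_head ga))"
      proof (cases ga)
        case (Star l i')
        have lr: "1 \<le> l" "l \<le> r" "1 \<le> i'" "i' \<le> k" using gA Star by (auto simp: arr_iff)
        have pc: "phi (Star l i') \<in> carrier_mat (d (LV i' 0)) 1" using rep_star[OF rep lr] dSV by simp
        show ?thesis
        proof (intro conjI ballI)
          fix x assume "x \<in> U (sn_tail ga)"
          then have xc: "x \<in> carrier_vec 1" unfolding Star U_def using dSV by simp
          show "phi ga *\<^sub>v x \<in> U (sn_head ga)"
          proof (cases "i' = i \<and> m = 0")
            case True
            have "g 0 (phi (Star l i) *\<^sub>v x) = 0" unfolding g_def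
              using True star[of l x] lr xc pc by simp
            then show ?thesis unfolding Star U_def using True pc xc by simp
          next
            case False
            then show ?thesis unfolding Star U_def using pc xc by auto
          qed
        next
          fix x assume "x \<in> W (sn_tail ga)"
          then have x0: "x = 0\<^sub>v 1" unfolding Star W_def using dSV by simp
          have "phi ga *\<^sub>v x = 0\<^sub>v (d (LV i' 0))" using pc x0 Star by simp
          moreover have "0\<^sub>v (d (LV i' 0)) \<in> W (LV i' 0)"
            unfolding W_def using Fc[of 0] by (auto intro!: exI[of _ 0])
          ultimately show "phi ga *\<^sub>v x \<in> W (sn_head ga)" using Star by simp
        qed
      next
        case (Leg i' j)
        have lr: "1 \<le> i'" "i' \<le> k" "1 \<le> j" "j \<le> s i'" using gA Leg by (auto simp: arr_iff)
        have pc: "phi (Leg i' j) \<in> carrier_mat (d (LV i' (j-1))) (d (LV i' j))" using rep_leg[OF rep lr] .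
        show ?thesis
        proof (intro conjI ballI)
          fix x assume xU: "x \<in> U (sn_tail ga)"
          then have xc: "x \<in> carrier_vec (d (LV i' j))" unfolding Leg U_def by (auto split: if_splits)
          show "phi ga *\<^sub>v x \<in> U (sn_head ga)"
          proof (cases "i' = i \<and> m \<le> j - 1")
            case True
            then have "g j x = 0" using xU unfolding Leg U_def by (auto split: if_splits)
            moreover have "m < j" using True lr by linarith
            ultimately have "g (j-1) (phi (Leg i j) *\<^sub>v x) = 0" using F3[of j x] True lr xc by simp
            then show ?thesis unfolding Leg U_def using True pc xc by simp
          next
            case False
            then show ?thesis unfolding Leg U_def using pc xc by auto
          qed
        next
          fix x assume xW: "x \<in> W (sn_tail ga)"
          show "phi ga *\<^sub>v x \<in> W (sn_head ga)"
          proof (cases "i' = i \<and> m \<le> j \<and> j \<le> t")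
            case True
            then obtain e where xe: "x = e \<cdot>\<^sub>v c j" using xW unfolding Leg W_def by auto
            have cjc: "c j \<in> carrier_vec (d (LV i j))" using Fc True by simp
            have px: "phi ga *\<^sub>v x = e \<cdot>\<^sub>v (phi (Leg i j) *\<^sub>v c j)"
              unfolding xe Leg using True pc cjc by (simp add: mult_mat_vec)
            show ?thesis
            proof (cases "m < j")
              case True2: True
              have "phi (Leg i j) *\<^sub>v c j = c (j-1)" using F4 True2 True by simp
              then show ?thesis unfolding px using True True2 unfolding Leg W_def by auto
            next
              case False
              then have jm: "j = m" using True by simp
              have "phi (Leg i j) *\<^sub>v c j = 0\<^sub>v (d (LV i (j-1)))"
                using bot jm lr True unfolding c_def by simp
              then have "phi ga *\<^sub>v x = 0\<^sub>v (d (LV i (j-1)))" using px by simp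
              then show ?thesis unfolding Leg W_def using jm lr True by auto
            qed
          next
            case False
            then have x0: "x = 0\<^sub>v (d (LV i' j))" using xW unfolding Leg W_def by auto
            have "phi ga *\<^sub>v x = 0\<^sub>v (d (LV i' (j-1)))" using pc x0 Leg by simp
            moreover have "0\<^sub>v (d (LV i' (j-1))) \<in> W (LV i' (j-1))"
              unfolding W_def using Fc[of "j-1"] by (auto intro!: exI[of _ 0])
            ultimately show ?thesis using Leg by simp
          qed
        qed
      qed
    qed
  next
    show "\<exists>a\<in>sn_vertices r k s. U a \<noteq> {0\<^sub>v (d a)}"
    proof (intro bexI)
      have "unit_vec 1 0 \<in> U (SV 1)" unfolding U_def using dSV by simp
      moreover have "unit_vec 1 0 \<noteq> (0\<^sub>v 1 :: 'k vec)"
      proof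
        assume "unit_vec 1 0 = (0\<^sub>v 1 :: 'k vec)"
        then have "unit_vec 1 0 $ 0 = (0\<^sub>v 1 :: 'k vec) $ 0" by simp
        then show False by simp
      qed
      ultimately show "U (SV 1) \<noteq> {0\<^sub>v (d (SV 1))}" using dSV by auto
      show "SV 1 \<in> sn_vertices r k s" using r1 by (simp add: vert_iff)
    qed
  next
    show "\<exists>a\<in>sn_vertices r k s. W a \<noteq> {0\<^sub>v (d a)}"
    proof (intro bexI)
      have "c m = 1 \<cdot>\<^sub>v c m" using Fc[of m] mt by simp
      then have "\<exists>e. c m = e \<cdot>\<^sub>v c m" by blast
      then have "c m \<in> W (LV i m)" unfolding W_def using mt by simp
      moreover have "c m \<noteq> 0\<^sub>v (d (LV i m))"
      proof
        assume "c m = 0\<^sub>v (d (LV i m))"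
        then have "g m (c m) = 0" unfolding g_def using wc by simp
        then show False using F1[of m] mt by simp
      qed
      ultimately show "W (LV i m) \<noteq> {0\<^sub>v (d (LV i m))}" by auto
      show "LV i m \<in> sn_vertices r k s" using i1 ik mt ts by (simp add: vert_iff)
    qed
  qed
qed




lemma image_subspace: assumes "(M :: 'k::field mat) \<in> carrier_mat n' n"
  shows "is_subspace n' {M *\<^sub>v v | v. v \<in> carrier_vec n}"
  unfolding is_subspace_def
proof (intro conjI ballI allI)
  show "{M *\<^sub>v v |v. v \<in> carrier_vec n} \<subseteq> carrier_vec n'" using assms by auto
  have "M *\<^sub>v 0\<^sub>v n = 0\<^sub>v n'" using assms by simp
  then show "0\<^sub>v n' \<in> {M *\<^sub>v v |v. v \<in> carrier_vec n}" by (metis (mono_tags, lifting) CollectI zero_carrier_vec)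
next
  fix x y assume "x \<in> {M *\<^sub>v v |v. v \<in> carrier_vec n}" "y \<in> {M *\<^sub>v v |v. v \<in> carrier_vec n}"
  then obtain a b where ab: "x = M *\<^sub>v a" "y = M *\<^sub>v b" "a \<in> carrier_vec n" "b \<in> carrier_vec n" by auto
  then have "x + y = M *\<^sub>v (a + b)" using assms by (simp add: mult_add_distrib_mat_vec)
  then show "x + y \<in> {M *\<^sub>v v |v. v \<in> carrier_vec n}" using ab by auto
next
  fix e x assume "x \<in> {M *\<^sub>v v |v. v \<in> carrier_vec n}"
  then obtain a where ab: "x = M *\<^sub>v a" "a \<in> carrier_vec n" by auto
  then have "e \<cdot>\<^sub>v x = M *\<^sub>v (e \<cdot>\<^sub>v a)" using assms by (simp add: mult_mat_vec)
  then show "e \<cdot>\<^sub>v x \<in> {M *\<^sub>v v |v. v \<in> carrier_vec n}" using ab by auto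
qed

theorem proposition3p8:
  fixes r k :: nat and s :: "nat \<Rightarrow> nat" and mu :: "nat \<Rightarrow> nat \<Rightarrow> nat"
    and phi :: "sn_arrow \<Rightarrow> 'k::field mat"
  assumes "r \<ge> 1" and "k \<ge> 1"
    and partition: "\<forall>i\<in>{1..k}. \<forall>f\<in>{1..s i}. mu i (f + 1) \<le> mu i f"
    and nonzero: "\<forall>i\<in>{1..k}. psize mu s i > 0"
    and bound: "\<forall>i\<in>{1..k}. r \<ge> psize mu s i + mu i 1"
    and rep: "is_rep (sn_vertices r k s) (sn_arrows r k s) sn_tail sn_head (dimvec mu s) phi"
    and indec: "indecomposable (sn_vertices r k s) (sn_arrows r k s) sn_tail sn_head (dimvec mu s) phi"
  shows "(\<forall>i\<in>{1..k}. \<forall>j\<in>{1..s i}.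
            inj_on (\<lambda>x. phi (Leg i j) *\<^sub>v x) (carrier_vec (dimvec mu s (LV i j))))
       \<and> (\<forall>i\<in>{1..k}. spans (dimvec mu s (LV i 0))
            {(\<lambda>x. phi (Star l i) *\<^sub>v x) ` carrier_vec 1 | l. l \<in> {1..r}})"
proof (intro conjI ballI)
  have nd: "\<not> decomposable (sn_vertices r k s) (sn_arrows r k s) sn_tail sn_head (dimvec mu s) phi"
    using indec unfolding indecomposable_def by auto
  have dSV: "\<And>l. dimvec mu s (SV l) = 1" by simp
  fix i assume iK: "i \<in> {1..k}"
  then have i1: "1 \<le> i" and ik: "i \<le> k" by auto
  interpret arm phi "dimvec mu s" i "s i" using rep_leg[OF rep i1 ik] by unfold_locales auto
  {
    fix j assume jS: "j \<in> {1..s i}"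
    show "inj_on (\<lambda>x. phi (Leg i j) *\<^sub>v x) (carrier_vec (dimvec mu s (LV i j)))"
    proof (rule ccontr)
      assume "\<not> ?thesis"
      then obtain x1 x2 where x12: "x1 \<in> carrier_vec (dimvec mu s (LV i j))" "x2 \<in> carrier_vec (dimvec mu s (LV i j))"
        "x1 \<noteq> x2" "phi (Leg i j) *\<^sub>v x1 = phi (Leg i j) *\<^sub>v x2" unfolding inj_on_def by auto
      define m where "m = j"
      have m1: "1 \<le> m" and ms: "m \<le> s i" using jS m_def by auto
      have pc: "phi (Leg i m) \<in> carrier_mat (dimvec mu s (LV i (m-1))) (dimvec mu s (LV i m))"
        using legc m1 ms by simp
      define x0 where "x0 = x1 - x2"
      have x0c: "x0 \<in> carrier_vec (dimvec mu s (LV i m))" using x12 x0_def m_def by auto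
      have x0n: "x0 \<noteq> 0\<^sub>v (dimvec mu s (LV i m))"
      proof
        assume "x0 = 0\<^sub>v (dimvec mu s (LV i m))"
        then have h: "(x1 - x2) $ ii = 0" if "ii < dimvec mu s (LV i j)" for ii
          unfolding x0_def using that m_def by simp
        have "x1 = x2"
        proof (rule eq_vecI)
          fix ii assume "ii < dim_vec x2"
          then show "x1 $ ii = x2 $ ii" using h[of ii] x12 by auto
        qed (use x12 in auto)
        then show False using x12 by simp
      qed
      have x0k: "phi (Leg i m) *\<^sub>v x0 = 0\<^sub>v (dimvec mu s (LV i (m-1)))"
        unfolding x0_def using x12 pc m_def by (simp add: mult_minus_distrib_mat_vec)
      define Q where "Q t' = (m \<le> t' \<and> t' \<le> s i \<and> (\<exists>y\<in>carrier_vec (dimvec mu s (LV i t')).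
          cm phi (dimvec mu s) i m (t'-m) *\<^sub>v y \<noteq> 0\<^sub>v (dimvec mu s (LV i m)) \<and>
          phi (Leg i m) *\<^sub>v (cm phi (dimvec mu s) i m (t'-m) *\<^sub>v y) = 0\<^sub>v (dimvec mu s (LV i (m-1)))))" for t'
      have Qm: "Q m" unfolding Q_def using ms x0c x0n x0k by (intro conjI bexI[of _ x0]) auto
      have Qb: "\<forall>y. Q y \<longrightarrow> y \<le> s i" unfolding Q_def by auto
      define t where "t = (GREATEST t'. Q t')"
      have Qt: "Q t" unfolding t_def by (rule GreatestI_nat[where P=Q, OF Qm]) (use Qb in auto)
      have tmax: "\<And>t'. Q t' \<Longrightarrow> t' \<le> t" unfolding t_def by (rule Greatest_le_nat) (use Qb in auto)
      have mt: "m \<le> t" and ts: "t \<le> s i" using Qt unfolding Q_def by auto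
      obtain y where yc: "y \<in> carrier_vec (dimvec mu s (LV i t))"
        and yn: "cm phi (dimvec mu s) i m (t-m) *\<^sub>v y \<noteq> 0\<^sub>v (dimvec mu s (LV i m))"
        and yk: "phi (Leg i m) *\<^sub>v (cm phi (dimvec mu s) i m (t-m) *\<^sub>v y) = 0\<^sub>v (dimvec mu s (LV i (m-1)))"
        using Qt unfolding Q_def by auto
      define z where "z = cm phi (dimvec mu s) i m (t-m) *\<^sub>v y"
      have cmt: "cm phi (dimvec mu s) i m (t-m) \<in> carrier_mat (dimvec mu s (LV i m)) (dimvec mu s (LV i t))"
        using cm_carrier[of m "t-m"] mt ts by simp
      have zc: "z \<in> carrier_vec (dimvec mu s (LV i m))" unfolding z_def using cmt yc by simp
      define Wsp where "Wsp = (if t < s i then {cm phi (dimvec mu s) i m (t+1-m) *\<^sub>v v | v. v \<in> carrier_vec (dimvec mu s (LV i (t+1)))}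
         else {0\<^sub>v (dimvec mu s (LV i m))})"
      have Wsub: "is_subspace (dimvec mu s (LV i m)) Wsp"
      proof (cases "t < s i")
        case True
        have "cm phi (dimvec mu s) i m (t+1-m) \<in> carrier_mat (dimvec mu s (LV i m)) (dimvec mu s (LV i (t+1)))"
          using cm_carrier[of m "t+1-m"] mt True by simp
        from image_subspace[OF this] show ?thesis unfolding Wsp_def using True by simp
      next
        case False
        then show ?thesis unfolding Wsp_def using zero_subspace by simp
      qed
      have zW: "z \<notin> Wsp"
      proof
        assume zin: "z \<in> Wsp"
        show False
        proof (cases "t < s i")
          case True
          then obtain v where vc: "v \<in> carrier_vec (dimvec mu s (LV i (t+1)))"
            and zv: "z = cm phi (dimvec mu s) i m (t+1-m) *\<^sub>v v" using zin unfolding Wsp_def by auto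
          have "Q (t+1)" unfolding Q_def
          proof (intro conjI bexI[of _ v])
            show "m \<le> t + 1" using mt by simp
            show "t + 1 \<le> s i" using True by simp
            show "v \<in> carrier_vec (dimvec mu s (LV i (t + 1)))" by (rule vc)
            show "cm phi (dimvec mu s) i m (t + 1 - m) *\<^sub>v v \<noteq> 0\<^sub>v (dimvec mu s (LV i m))"
              using yn zv unfolding z_def by simp
            show "phi (Leg i m) *\<^sub>v (cm phi (dimvec mu s) i m (t + 1 - m) *\<^sub>v v) = 0\<^sub>v (dimvec mu s (LV i (m - 1)))"
              using yk zv unfolding z_def by simp
          qed
          then have "t + 1 \<le> t" by (rule tmax)
          then show False by simp
        next
          case False
          then show False using zin yn unfolding Wsp_def z_def by simp
        qed
      qed
      obtain w where wc: "w \<in> carrier_vec (dimvec mu s (LV i m))" and wz: "w \<bullet> z = 1"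
        and wW: "\<forall>u\<in>Wsp. w \<bullet> u = 0"
        using sep_lemma[OF Wsub zc zW] by auto
      have "decomposable (sn_vertices r k s) (sn_arrows r k s) sn_tail sn_head (dimvec mu s) phi"
      proof (rule decomp[OF rep dSV \<open>r \<ge> 1\<close> i1 ik mt ts yc wc])
        show "w \<bullet> (cm phi (dimvec mu s) i m (t - m) *\<^sub>v y) = 1" using wz z_def by simp
      next
        fix j' and x :: "'k vec" assume tj: "t < j'" and js: "j' \<le> s i" and xc: "x \<in> carrier_vec (dimvec mu s (LV i j'))"
        have ts': "t < s i" using tj js by simp
        have eq: "cm phi (dimvec mu s) i m (j'-m) = cm phi (dimvec mu s) i m (t+1-m) * cm phi (dimvec mu s) i (t+1) (j'-(t+1))"
        proof -
          have a1: "j' - m = (t+1-m) + (j'-(t+1))" using mt tj by arith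
          have a2: "m + (t+1-m) = t+1" using mt by arith
          have "cm phi (dimvec mu s) i m (j'-m) = cm phi (dimvec mu s) i m ((t+1-m) + (j'-(t+1)))"
            by (subst a1) (rule refl)
          also have "\<dots> = cm phi (dimvec mu s) i m (t+1-m) * cm phi (dimvec mu s) i (m + (t+1-m)) (j'-(t+1))"
            by (rule cm_comp) (use mt tj js in arith)
          also have "\<dots> = cm phi (dimvec mu s) i m (t+1-m) * cm phi (dimvec mu s) i (t+1) (j'-(t+1))"
            by (subst a2) (rule refl)
          finally show ?thesis .
        qed
        have c1: "cm phi (dimvec mu s) i m (t+1-m) \<in> carrier_mat (dimvec mu s (LV i m)) (dimvec mu s (LV i (t+1)))"
          using cm_carrier[of m "t+1-m"] mt ts' by simp
        have c2: "cm phi (dimvec mu s) i (t+1) (j'-(t+1)) \<in> carrier_mat (dimvec mu s (LV i (t+1))) (dimvec mu s (LV i j'))"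
          using cm_carrier[of "t+1" "j'-(t+1)"] tj js by simp
        have ex: "cm phi (dimvec mu s) i m (j'-m) *\<^sub>v x = cm phi (dimvec mu s) i m (t+1-m) *\<^sub>v (cm phi (dimvec mu s) i (t+1) (j'-(t+1)) *\<^sub>v x)"
          unfolding eq by (rule assoc_mult_mat_vec[OF c1 c2 xc])
        have "cm phi (dimvec mu s) i (t+1) (j'-(t+1)) *\<^sub>v x \<in> carrier_vec (dimvec mu s (LV i (t+1)))"
          using c2 xc by simp
        then have "cm phi (dimvec mu s) i m (j'-m) *\<^sub>v x \<in> {cm phi (dimvec mu s) i m (t+1-m) *\<^sub>v v | v. v \<in> carrier_vec (dimvec mu s (LV i (t+1)))}"
          unfolding ex by blast
        then have "cm phi (dimvec mu s) i m (j'-m) *\<^sub>v x \<in> Wsp"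
          unfolding Wsp_def using ts' by simp
        then show "w \<bullet> (cm phi (dimvec mu s) i m (j' - m) *\<^sub>v x) = 0" using wW by auto
      next
        fix l and x :: "'k vec" assume "m = 0" then show "w \<bullet> (phi (Star l i) *\<^sub>v x) = 0" using m1 by simp
      next
        show "phi (Leg i m) *\<^sub>v (cm phi (dimvec mu s) i m (t - m) *\<^sub>v y) = 0\<^sub>v (dimvec mu s (LV i (m - 1)))"
          using yk .
      qed
      then show False using nd by simp
    qed
  }
  show "spans (dimvec mu s (LV i 0)) {(\<lambda>x. phi (Star l i) *\<^sub>v x) ` carrier_vec 1 | l. l \<in> {1..r}}"
  proof (rule ccontr)
    assume "\<not> ?thesis"
    then obtain U0 where U0: "is_subspace (dimvec mu s (LV i 0)) U0"
      and U0s: "\<Union>{(\<lambda>x. phi (Star l i) *\<^sub>v x) ` carrier_vec 1 | l. l \<in> {1..r}} \<subseteq> U0"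
      and U0n: "\<not> carrier_vec (dimvec mu s (LV i 0)) \<subseteq> U0"
      unfolding spans_def by auto
    then obtain z where zc: "z \<in> carrier_vec (dimvec mu s (LV i 0))" and zU: "z \<notin> U0" by auto
    obtain w where wc: "w \<in> carrier_vec (dimvec mu s (LV i 0))" and wz: "w \<bullet> z = 1"
      and wU: "\<forall>u\<in>U0. w \<bullet> u = 0"
      using sep_lemma[OF U0 zc zU] by auto
    define P where "P j = (j \<le> s i \<and> (\<exists>x\<in>carrier_vec (dimvec mu s (LV i j)).
        w \<bullet> (cm phi (dimvec mu s) i 0 j *\<^sub>v x) \<noteq> 0))" for j
    have P0: "P 0" unfolding P_def using zc wz by (intro conjI bexI[of _ z]) auto
    have Pb: "\<forall>y. P y \<longrightarrow> y \<le> s i" unfolding P_def by auto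
    define t where "t = (GREATEST t'. P t')"
    have Pt: "P t" unfolding t_def by (rule GreatestI_nat[where P=P, OF P0]) (use Pb in auto)
    have tmax: "\<And>t'. P t' \<Longrightarrow> t' \<le> t" unfolding t_def by (rule Greatest_le_nat) (use Pb in auto)
    have ts: "t \<le> s i" using Pt unfolding P_def by auto
    obtain x where xc: "x \<in> carrier_vec (dimvec mu s (LV i t))"
      and xn: "w \<bullet> (cm phi (dimvec mu s) i 0 t *\<^sub>v x) \<noteq> 0"
      using Pt unfolding P_def by auto
    define a where "a = w \<bullet> (cm phi (dimvec mu s) i 0 t *\<^sub>v x)"
    define y where "y = (1/a) \<cdot>\<^sub>v x"
    have cmt: "cm phi (dimvec mu s) i 0 t \<in> carrier_mat (dimvec mu s (LV i 0)) (dimvec mu s (LV i t))"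
      using cm_carrier[of 0 t] ts by simp
    have yc: "y \<in> carrier_vec (dimvec mu s (LV i t))" using xc y_def by simp
    have "decomposable (sn_vertices r k s) (sn_arrows r k s) sn_tail sn_head (dimvec mu s) phi"
      apply (rule decomp[OF rep dSV \<open>r \<ge> 1\<close> i1 ik _ ts yc wc])
      subgoal by simp
      subgoal unfolding y_def using lin_g(2)[OF cmt wc xc xc, of "1/a"] xn a_def by simp
      subgoal for j' x'
      proof -
        assume tj: "t < j'" and js: "j' \<le> s i" and xc': "x' \<in> carrier_vec (dimvec mu s (LV i j'))"
        have "\<not> P j'"
        proof
          assume "P j'"
          then have "j' \<le> t" by (rule tmax)
          then show False using tj by simp
        qed
        then show "w \<bullet> (cm phi (dimvec mu s) i 0 (j' - 0) *\<^sub>v x') = 0" using js xc' unfolding P_def by auto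
      qed
      subgoal for l x'
      proof -
        assume "0 = (0::nat)" "1 \<le> l" "l \<le> r" "x' \<in> carrier_vec 1"
        then have m1: "phi (Star l i) *\<^sub>v x' \<in> (\<lambda>x. phi (Star l i) *\<^sub>v x) ` carrier_vec 1" by simp
        have m2: "(\<lambda>x. phi (Star l i) *\<^sub>v x) ` carrier_vec 1 \<in> {(\<lambda>x. phi (Star l i) *\<^sub>v x) ` carrier_vec 1 | l. l \<in> {1..r}}"
          using \<open>1 \<le> l\<close> \<open>l \<le> r\<close> by (intro CollectI exI[of _ l] conjI refl) simp
        have "phi (Star l i) *\<^sub>v x' \<in> U0" using U0s UnionI[OF m2 m1] by (rule subsetD)
        then show "w \<bullet> (phi (Star l i) *\<^sub>v x') = 0" using wU by auto
      qed
      subgoal by simp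
      done
    then show False using nd by simp
  qed
qed


end
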